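(* Let $X$ be a finite connected quandle. Then its type $t_X$ divides $|\mathrm{Inn}(X)|/|X|$.
   Context: A quandle is a set $X$ with a binary operation $\lhd$ such that $a\lhd a=a$ for all $a$, each map $x\mapsto x\lhd a$ is a bijection of $X$, and $(a\lhd b)\lhd c=(a\lhd c)\lhd(b\lhd c)$ for all $a,b,c$. The adjoint group $\mathrm{As}(X)$ is the group with generators $e_x$ ($x\in X$) and relations $e_{x\lhd y}=e_y^{-1}e_xe_y$. It acts on $X$ from the right by $x\cdot e_y=x\lhd y$; $X$ is connected if this action is transitive; $\mathrm{Inn}(X)\subset\mathfrak S_X$ is the image of the corresponding homomorphism $\mathrm{As}(X)\to\mathfrak S_X$. $x\lhd^N y$ denotes the $N$-fold application of $\bullet\lhd y$ to $x$; the type $t_X$ is the smallest positive integer $N$ with $x\lhd^N y=x$ for all $x,y\in X$ (it exists for finite $X$). *)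

theory Defs
  imports Main
begin

text \<open>A quandle structure on the whole (finite) type 'a, with operation
  op x y = x \<lhd> y.\<close>
definition is_quandle :: "('a \<Rightarrow> 'a \<Rightarrow> 'a) \<Rightarrow> bool" where
  "is_quandle op \<longleftrightarrow>
     (\<forall>a. op a a = a) \<and>
     (\<forall>a. bij (\<lambda>x. op x a)) \<and>
     (\<forall>a b c. op (op a b) c = op (op a c) (op b c))"

inductive_set Inn :: "('a \<Rightarrow> 'a \<Rightarrow> 'a) \<Rightarrow> ('a \<Rightarrow> 'a) set" for op where
  Inn_id: "id \<in> Inn op"
| Inn_R: "f \<in> Inn op \<Longrightarrow> (\<lambda>x. op x y) \<circ> f \<in> Inn op"
| Inn_Rinv: "f \<in> Inn op \<Longrightarrow> inv (\<lambda>x. op x y) \<circ> f \<in> Inn op"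

definition quandle_connected :: "('a \<Rightarrow> 'a \<Rightarrow> 'a) \<Rightarrow> bool" where
  "quandle_connected op \<longleftrightarrow> (\<forall>x z. \<exists>g\<in>Inn op. g x = z)"

definition quandle_type :: "('a \<Rightarrow> 'a \<Rightarrow> 'a) \<Rightarrow> nat" where
  "quandle_type op = (LEAST N. 0 < N \<and> (\<forall>x y. ((\<lambda>z. op z y) ^^ N) x = x))"

end

theory Submission
  imports Defs "HOL-Algebra.Multiplicative_Group"
begin

lemma Inn_comp: "g \<in> Inn op \<Longrightarrow> f \<in> Inn op \<Longrightarrow> g \<circ> f \<in> Inn op"
  by (induction rule: Inn.induct) (auto simp: comp_assoc intro: Inn.intros)

lemma Inn_bij: "f \<in> Inn op \<Longrightarrow> is_quandle op \<Longrightarrow> bij f"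
  by (induction rule: Inn.induct) (auto simp: is_quandle_def intro: bij_comp bij_imp_bij_inv)

lemma Inn_R: "(\<lambda>x. op x y) \<in> Inn op"
  using Inn.Inn_R[OF Inn.Inn_id, of op y] by simp

lemma Inn_Ri: "inv_into UNIV (\<lambda>x. op x y) \<in> Inn op"
  using Inn.Inn_Rinv[OF Inn.Inn_id, of op y] by simp

lemma Inn_inv: "f \<in> Inn op \<Longrightarrow> is_quandle op \<Longrightarrow> inv_into UNIV f \<in> Inn op"
proof (induction rule: Inn.induct)
  case Inn_id
  then show ?case using Inn.Inn_id by (metis inv_id)
next
  case (Inn_R f y)
  have b: "bij (\<lambda>x. op x y)" using Inn_R.prems by (simp add: is_quandle_def)
  have "inv_into UNIV ((\<lambda>x. op x y) \<circ> f) = inv_into UNIV f \<circ> inv_into UNIV (\<lambda>x. op x y)"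
    using b Inn_bij[OF Inn_R.hyps(1) Inn_R.prems] by (simp add: o_inv_distrib)
  then show ?case using Inn_R Inn_comp Inn_Ri by metis
next
  case (Inn_Rinv f y)
  have b: "bij (\<lambda>x. op x y)" using Inn_Rinv.prems by (simp add: is_quandle_def)
  have "inv_into UNIV (inv_into UNIV (\<lambda>x. op x y) \<circ> f) = inv_into UNIV f \<circ> (\<lambda>x. op x y)"
    using b Inn_bij[OF Inn_Rinv.hyps(1) Inn_Rinv.prems]
    by (simp add: o_inv_distrib bij_imp_bij_inv inv_inv_eq)
  then show ?case using Inn_Rinv Inn_comp Inn_R by metis
qed

definition stabG :: "('a \<Rightarrow> 'a \<Rightarrow> 'a) \<Rightarrow> 'a \<Rightarrow> ('a \<Rightarrow> 'a) monoid" where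
  "stabG op x = \<lparr>carrier = {g \<in> Inn op. g x = x}, mult = (\<circ>), one = id\<rparr>"

lemma stabG_group: "is_quandle op \<Longrightarrow> group (stabG op x)"
proof (rule groupI)
  assume q: "is_quandle op"
  fix g assume g: "g \<in> carrier (stabG op x)"
  then have gi: "g \<in> Inn op" "g x = x" by (auto simp: stabG_def)
  have bg: "bij g" using Inn_bij[OF gi(1) q] .
  have "inv_into UNIV g \<in> carrier (stabG op x)"
    using Inn_inv[OF gi(1) q] gi(2) bg by (auto simp: stabG_def bij_def inv_f_eq)
  moreover have "inv_into UNIV g \<circ> g = id" using bg by (simp add: bij_def inv_o_cancel)
  ultimately show "\<exists>y\<in>carrier (stabG op x). y \<otimes>\<^bsub>stabG op x\<^esub> g = \<one>\<^bsub>stabG op x\<^esub>"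
    by (auto simp: stabG_def)
qed (auto simp: stabG_def Inn_comp Inn.Inn_id comp_assoc)

lemma stabG_pow: "f [^]\<^bsub>stabG op x\<^esub> (n::nat) = f ^^ n"
  by (induction n) (auto simp: stabG_def funpow_swap1)

lemma finite_Inn: "finite (Inn (op :: 'a::finite \<Rightarrow> 'a \<Rightarrow> 'a))"
  by (rule finite_subset[of _ UNIV]) auto

lemma fiber_card:
  fixes op :: "'a::finite \<Rightarrow> 'a \<Rightarrow> 'a"
  assumes q: "is_quandle op" and c: "quandle_connected op"
  shows "card {g \<in> Inn op. g x = z} = card {g \<in> Inn op. g x = x}"
proof -
  obtain g0 where g0: "g0 \<in> Inn op" "g0 x = z" using c by (auto simp: quandle_connected_def)
  have b: "bij g0" using Inn_bij[OF g0(1) q] .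
  have "bij_betw (\<lambda>h. g0 \<circ> h) {g \<in> Inn op. g x = x} {g \<in> Inn op. g x = z}"
  proof (rule bij_betw_byWitness[where f' = "\<lambda>f. inv_into UNIV g0 \<circ> f"])
    show "\<forall>a\<in>{g \<in> Inn op. g x = x}. inv_into UNIV g0 \<circ> (g0 \<circ> a) = a"
      using b by (simp add: bij_def inv_o_cancel flip: comp_assoc)
    show "\<forall>a'\<in>{g \<in> Inn op. g x = z}. g0 \<circ> (inv_into UNIV g0 \<circ> a') = a'"
      using b by (simp add: bij_def surj_iff flip: comp_assoc)
    show "(\<circ>) g0 ` {g \<in> Inn op. g x = x} \<subseteq> {g \<in> Inn op. g x = z}"
      using g0 Inn_comp by auto
    show "(\<circ>) (inv_into UNIV g0) ` {g \<in> Inn op. g x = z} \<subseteq> {g \<in> Inn op. g x = x}"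
      using g0 Inn_comp Inn_inv[OF g0(1) q] b by (auto simp: bij_def inv_f_eq)
  qed
  then show ?thesis by (simp add: bij_betw_same_card)
qed

lemma orbit_stab:
  fixes op :: "'a::finite \<Rightarrow> 'a \<Rightarrow> 'a"
  assumes q: "is_quandle op" and c: "quandle_connected op"
  shows "card (Inn op) = card (UNIV :: 'a set) * card {g \<in> Inn op. g x = x}"
proof -
  have e: "Inn op = (\<Union>z\<in>UNIV. {g \<in> Inn op. g x = z})" by auto
  have "card (Inn op) = (\<Sum>z\<in>UNIV. card {g \<in> Inn op. g x = z})"
    by (subst e, rule card_UN_disjoint) (auto intro: finite_subset[OF _ finite_Inn])
  also have "\<dots> = (\<Sum>z\<in>(UNIV::'a set). card {g \<in> Inn op. g x = x})"
    by (rule sum.cong[OF refl], rule fiber_card[OF q c])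
  finally show ?thesis by simp
qed

theorem lemma3p6:
  fixes op :: "'a::finite \<Rightarrow> 'a \<Rightarrow> 'a"
  assumes "is_quandle op"
    and "quandle_connected op"
  shows "quandle_type op dvd (card (Inn op) div card (UNIV :: 'a set))"
proof -
  define M where "M = card (Inn op) div card (UNIV :: 'a set)"
  have Mst: "M = card {g \<in> Inn op. g x = x}" for x
    unfolding M_def using orbit_stab[OF assms, of x] by simp
  have Mpos: "0 < M"
  proof -
    fix x :: 'a
    have "id \<in> {g \<in> Inn op. g x = x}" by (simp add: Inn.Inn_id)
    then show ?thesis unfolding Mst[of x]
      by (metis (mono_tags, lifting) card_gt_0_iff empty_iff finite_Inn finite_subset mem_Collect_eq subsetI)
  qed
  have Mpow: "((\<lambda>z. op z y) ^^ M) = id" for y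
  proof -
    interpret G: group "stabG op y" using stabG_group[OF assms(1)] .
    have "(\<lambda>z. op z y) \<in> carrier (stabG op y)"
      using assms(1) Inn_R by (auto simp: stabG_def is_quandle_def)
    from G.pow_order_eq_1[OF this] show ?thesis
      by (simp add: stabG_pow order_def Mst[of y]) (simp add: stabG_def)
  qed
  define P where "P = (\<lambda>N. 0 < N \<and> (\<forall>x y. ((\<lambda>z. op z y) ^^ N) x = x))"
  have PM: "P M" using Mpos Mpow by (simp add: P_def)
  define t where "t = (LEAST N. P N)"
  have tdef: "quandle_type op = t" by (simp add: quandle_type_def t_def P_def)
  have Pt: "P t" unfolding t_def using PM by (rule LeastI)
  have tid: "((\<lambda>z. op z y) ^^ t) = id" for y using Pt by (auto simp: P_def)
  have "((\<lambda>z. op z y) ^^ (M mod t)) = id" for y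
  proof -
    have "M = M mod t + t * (M div t)" by simp
    then have "((\<lambda>z. op z y) ^^ M) = ((\<lambda>z. op z y) ^^ (M mod t)) \<circ> (((\<lambda>z. op z y) ^^ t) ^^ (M div t))"
      by (metis funpow_add funpow_mult)
    then show ?thesis using Mpow tid by simp
  qed
  then have "M mod t = 0"
    using not_less_Least[of "M mod t" P] Pt unfolding t_def[symmetric]
    by (metis P_def id_apply mod_less_divisor neq0_conv)
  then show ?thesis by (simp add: tdef M_def[symmetric] mod_eq_0_iff_dvd)
qed

end
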